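(* Let $q$ be a prime power and let $\mathcal C$ be an optimal $(5,3)_q$ subspace code, i.e. a set of subspaces of $V={\rm GF}(q)^5$ with minimum subspace distance $3$ and of maximum possible size among such sets. If $\mathcal C$ contains a point of ${\rm PG}(4,q)$ (a $1$-dimensional subspace of $V$), then $\mathcal C$ contains at most $q^3$ planes (3-dimensional subspaces of $V$). Dually, if $\mathcal C$ contains a solid (a $4$-dimensional subspace of $V$), then $\mathcal C$ contains at most $q^3$ lines ($2$-dimensional subspaces of $V$).
   Context: The subspace distance between subspaces $U,U'$ of $V$ is $d_s(U,U')=\dim(U+U')-\dim(U\cap U')$. The minimum subspace distance of a set $\mathcal C$ of subspaces is $\min\{d_s(U,U') : U,U'\in\mathcal C, U\ne U'\}$. Points, lines, planes and solids of ${\rm PG}(4,q)$ are the subspaces of $V$ of (vector) dimension $1,2,3,4$ respectively. *)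

theory Defs
  imports "HOL-Analysis.Analysis"
begin

text \<open>The ambient space V = GF(q)^5 is modelled as the type 'a^5 for a finite field 'a
  (so q = CARD('a), automatically a prime power).\<close>

definition subspace_sum :: "('a::field ^ 'n) set \<Rightarrow> ('a ^ 'n) set \<Rightarrow> ('a ^ 'n) set" where
  "subspace_sum U W = {u + w | u w. u \<in> U \<and> w \<in> W}"

definition subspace_dist :: "('a::field ^ 'n) set \<Rightarrow> ('a ^ 'n) set \<Rightarrow> nat" where
  "subspace_dist U W = vec.dim (subspace_sum U W) - vec.dim (U \<inter> W)"

definition min_subspace_dist :: "('a::field ^ 'n) set set \<Rightarrow> nat" where
  "min_subspace_dist C = Min {subspace_dist U W | U W. U \<in> C \<and> W \<in> C \<and> U \<noteq> W}"

definition subspace_code :: "nat \<Rightarrow> ('a::field ^ 'n) set set \<Rightarrow> bool" where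
  "subspace_code d (C :: ('a::field ^ 'n) set set) \<longleftrightarrow> (\<forall>U\<in>C. vec.subspace U) \<and> min_subspace_dist C = d"

definition optimal_subspace_code :: "nat \<Rightarrow> ('a::field ^ 'n) set set \<Rightarrow> bool" where
  "optimal_subspace_code d (C :: ('a::field ^ 'n) set set) \<longleftrightarrow> subspace_code d C \<and>
     (\<forall>C' :: ('a ^ 'n) set set. subspace_code d C' \<longrightarrow> card C' \<le> card C)"

end

theory Submission
  imports Defs "HOL-Library.FuncSet"
begin
lemma vsp: "vector_space_pair ((*s) :: 'a::field \<Rightarrow> 'a^'n \<Rightarrow> 'a^'n) ((*) :: 'a \<Rightarrow> 'a \<Rightarrow> 'a)"
  unfolding vector_space_pair_def
  using vec.vector_space_axioms vector_space_over_itself.vector_space_axioms by blast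

definition dp :: "'a::field^'n \<Rightarrow> 'a^'n \<Rightarrow> 'a" where "dp y x = (\<Sum>i\<in>UNIV. y$i * x$i)"

lemma dp_add: "dp y (u + w) = dp y u + dp y w"
  unfolding dp_def by (simp add: distrib_left sum.distrib)
lemma dp_scale: "dp y (c *s u) = c * dp y u"
  unfolding dp_def by (simp add: sum_distrib_left algebra_simps)
lemma dp_zero: "dp y 0 = 0"
  unfolding dp_def by simp
lemma dp_add_left: "dp (y + z) u = dp y u + dp z u"
  unfolding dp_def by (simp add: distrib_right sum.distrib)
lemma dp_scale_left: "dp (c *s y) u = c * dp y u"
  unfolding dp_def by (simp add: sum_distrib_left algebra_simps)
lemma dp_zero_left: "dp 0 u = 0"
  unfolding dp_def by simp

lemma vec_axis_sum: "(x::'a::field^'n) = (\<Sum>i\<in>UNIV. x$i *s axis i 1)"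
  by (simp add: vec_eq_iff axis_def sum_component if_distrib cong: if_cong)

lemma lin_rep:
  fixes g :: "'a::field^'n \<Rightarrow> 'a"
  assumes "Vector_Spaces.linear (*s) (*) g"
  shows "g x = dp (\<chi> i. g (axis i 1)) x"
proof -
  have "g x = g (\<Sum>i\<in>UNIV. x$i *s axis i 1)" using vec_axis_sum[of x] by simp
  also have "\<dots> = (\<Sum>i\<in>UNIV. g (x$i *s axis i 1))"
    by (rule vector_space_pair.linear_sum[OF vsp assms])
  also have "\<dots> = (\<Sum>i\<in>UNIV. x$i * g (axis i 1))"
    using vector_space_pair.linear_scale[OF vsp assms] by simp
  finally show ?thesis unfolding dp_def by (simp add: mult.commute)
qed

lemma exists_functional:
  fixes B :: "('a::field^'n) set"
  assumes "vec.independent B"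
  shows "\<exists>y. \<forall>b\<in>B. dp y b = f b"
proof -
  obtain g where g: "Vector_Spaces.linear (*s) (*) g" "\<forall>x\<in>B. g x = f x"
    using vector_space_pair.linear_independent_extend[OF vsp assms] by blast
  show ?thesis using g lin_rep[OF g(1)] by metis
qed

lemma dp_subspace: "vec.subspace {x. dp y x = 0}"
  unfolding vec.subspace_def by (simp add: dp_add dp_scale dp_zero)

lemma dp_span:
  assumes "\<forall>b\<in>B. dp y b = 0" "x \<in> vec.span B"
  shows "dp y x = 0"
proof -
  have "vec.span B \<subseteq> {x. dp y x = 0}"
    using assms(1) dp_subspace vec.span_minimal[of B "{x. dp y x = 0}"] by blast
  then show ?thesis using assms(2) by blast
qed
lemma card_subspace:
  fixes U :: "('a::{finite,field} ^ 'n) set"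
  assumes "vec.subspace U"
  shows "card U = CARD('a) ^ vec.dim U"
proof -
  obtain B where B: "B \<subseteq> U" "vec.independent B" "U \<subseteq> vec.span B" "card B = vec.dim U"
    using vec.basis_exists by blast
  have fB: "finite B" by simp
  have UB: "U = vec.span B"
    using B assms vec.span_minimal by blast
  define f where "f = (\<lambda>u. \<Sum>v\<in>B. u v *s v)"
  have "vec.span B = range f" unfolding f_def using vec.span_finite[OF fB] by simp
  also have "range f = f ` (PiE B (\<lambda>_. UNIV))"
  proof
    show "range f \<subseteq> f ` (PiE B (\<lambda>_. UNIV))"
    proof
      fix x assume "x \<in> range f"
      then obtain u where x: "x = f u" by auto
      have "f u = f (restrict u B)" unfolding f_def by (intro sum.cong) auto
      then show "x \<in> f ` (PiE B (\<lambda>_. UNIV))" using x by auto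
    qed
  qed auto
  finally have Uf: "U = f ` (PiE B (\<lambda>_. UNIV))" using UB by simp
  have inj: "inj_on f (PiE B (\<lambda>_. UNIV))"
  proof
    fix u w assume u: "u \<in> PiE B (\<lambda>_. UNIV)" and w: "w \<in> PiE B (\<lambda>_. UNIV)" and e: "f u = f w"
    have "(\<Sum>v\<in>B. (u v - w v) *s v) = f u - f w"
      unfolding f_def by (simp add: vector_sub_rdistrib sum_subtractf)
    then have z: "(\<Sum>v\<in>B. (u v - w v) *s v) = 0" using e by simp
    have indep: "\<forall>c. (\<Sum>v\<in>B. c v *s v) = 0 \<longrightarrow> (\<forall>v\<in>B. c v = 0)"
      using B(2) vec.independent_explicit by blast
    have "\<forall>v\<in>B. u v - w v = 0" using spec[OF indep, of "\<lambda>v. u v - w v"] z by simp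
    then show "u = w" by (intro PiE_ext[OF u w]) auto
  qed
  have "card U = card (PiE B (\<lambda>_. (UNIV::'a set)))" using Uf inj card_image by metis
  also have "\<dots> = CARD('a) ^ card B" by (simp add: card_PiE)
  finally show ?thesis using B(4) by simp
qed

lemma code_dist:
  fixes C :: "('a::{finite,field}^'n) set set"
  assumes "subspace_code 3 C" "U\<in>C" "W\<in>C" "U\<noteq>W"
  shows "3 \<le> subspace_dist U W"
proof -
  let ?A = "{subspace_dist U W | U W. U \<in> C \<and> W \<in> C \<and> U \<noteq> W}"
  have "?A \<subseteq> (\<lambda>(U,W). subspace_dist U W) ` (C \<times> C)" by auto
  then have "finite ?A" by (rule finite_subset) simp
  moreover have "subspace_dist U W \<in> ?A" using assms by blast
  ultimately have "Min ?A \<le> subspace_dist U W" by (rule Min_le)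
  moreover have "Min ?A = 3" using assms(1) unfolding subspace_code_def min_subspace_dist_def by simp
  ultimately show ?thesis by simp
qed

lemma dim_sum:
  assumes "vec.subspace U" "vec.subspace W"
  shows "vec.dim (subspace_sum U W) + vec.dim (U \<inter> W) = vec.dim U + vec.dim W"
  unfolding subspace_sum_def using vec.dim_sums_Int[OF assms] .

lemma sum_sub:
  assumes "vec.subspace U" "vec.subspace W" "U \<subseteq> W"
  shows "subspace_sum U W = W"
proof
  show "subspace_sum U W \<subseteq> W" unfolding subspace_sum_def
    using assms vec.subspace_add by blast
  show "W \<subseteq> subspace_sum U W" unfolding subspace_sum_def
  proof
    fix x assume "x \<in> W"
    then have "x = 0 + x \<and> 0 \<in> U \<and> x \<in> W" using assms(1) vec.subspace_0 by auto
    then show "x \<in> {u + w |u w. u \<in> U \<and> w \<in> W}" by blast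
  qed
qed

lemma dim0:
  fixes U :: "('a::{finite,field}^'n) set"
  assumes "vec.subspace U" "vec.dim U = 0"
  shows "U = {0}"
proof -
  have "card U = 1" using card_subspace[OF assms(1)] assms(2) by simp
  moreover have "0 \<in> U" using assms(1) vec.subspace_0 by blast
  ultimately show ?thesis by (metis card_1_singletonE singletonD)
qed

lemma card_univ: "card (UNIV :: ('a::{finite,field}^'n) set) = CARD('a) ^ CARD('n)"
  using card_subspace[OF vec.subspace_UNIV] vec_dim_card by metis

lemma full:
  fixes U :: "('a::{finite,field}^'n) set"
  assumes "vec.subspace U" "vec.dim U = CARD('n)"
  shows "U = UNIV"
  using card_subspace[OF assms(1)] assms(2) card_univ[where 'a='a and 'n='n]
  by (metis card_subset_eq finite subset_UNIV)

lemma q_ge2: "2 \<le> CARD('a::{finite,field})"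
proof -
  have "card {0::'a, 1} = 2" by simp
  moreover have "card {0::'a, 1} \<le> CARD('a)" by (rule card_mono) auto
  ultimately show ?thesis by simp
qed

lemma dp_axis: "dp (axis j 1) p = p $ j"
proof -
  have "(\<Sum>i\<in>UNIV. (if i = j then 1 else 0) * p $ i) = (\<Sum>i\<in>UNIV. if i = j then p $ i else 0)"
    by (rule sum.cong) auto
  then show ?thesis unfolding dp_def axis_def by simp
qed

lemma card_A:
  fixes p :: "'a::{finite,field}^'n"
  assumes "p \<noteq> 0"
  shows "card {y. dp y p = 1} \<le> CARD('a) ^ (CARD('n) - 1)"
proof -
  obtain j where j: "p $ j \<noteq> 0" using assms by (metis vec_eq_iff zero_index)
  let ?A = "{y. dp y p = 1}"
  let ?f = "\<lambda>y::'a^'n. restrict (vec_nth y) (UNIV - {j})"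
  have "inj_on ?f ?A"
  proof
    fix y z assume y: "y \<in> ?A" and z: "z \<in> ?A" and e: "?f y = ?f z"
    have oth: "y $ i = z $ i" if "i \<noteq> j" for i
      using fun_cong[OF e, of i] that by simp
    have yz: "y - z = (y $ j - z $ j) *s axis j 1"
      using oth by (auto simp: vec_eq_iff axis_def)
    have "dp (y - z) p = 0" using y z dp_add_left[of y "- z" p] dp_scale_left[of "-1" z p]
      by (simp add: scalar_mult_eq_scaleR)
    then have "(y $ j - z $ j) * p $ j = 0" using yz dp_scale_left dp_axis by metis
    then have "y $ j = z $ j" using j by simp
    then show "y = z" using oth by (metis vec_eq_iff)
  qed
  moreover have "?f ` ?A \<subseteq> PiE (UNIV - {j}) (\<lambda>_. UNIV)" by auto
  ultimately have "card ?A \<le> card (PiE (UNIV - {j}) (\<lambda>_. (UNIV::'a set)))"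
    by (metis card_image card_mono finite)
  also have "\<dots> = CARD('a) ^ (CARD('n) - 1)" by (simp add: card_PiE card_Diff_subset)
  finally show ?thesis .
qed


lemma part1:
  fixes C :: "('a::{finite,field} ^ 5) set set"
  assumes code: "subspace_code 3 C" and PC: "P \<in> C" and dP: "vec.dim P = 1"
  shows "card {U \<in> C. vec.dim U = 3} \<le> CARD('a) ^ 3"
proof -
  let ?q = "CARD('a)"
  let ?Ps = "{U \<in> C. vec.dim U = 3}"
  have q2: "2 \<le> ?q" by (rule q_ge2)
  have sub: "\<And>U. U \<in> C \<Longrightarrow> vec.subspace U" using code unfolding subspace_code_def by blast
  have subP: "vec.subspace P" using sub PC .
  have cP: "card P = ?q" using card_subspace[OF subP] dP by simp
  obtain p where pP: "p \<in> P" and p0: "p \<noteq> 0"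
  proof -
    have "\<not> P \<subseteq> {0}"
    proof
      assume "P \<subseteq> {0}"
      then have "card P \<le> card {0::'a^5}" by (intro card_mono) auto
      then have "card P \<le> 1" by simp
      then show False using cP q2 by simp
    qed
    then show ?thesis using that by blast
  qed
  have indp: "vec.independent {p}"
    using vec.independent_insertI[of p "{}"] p0 vec.span_empty vec.independent_empty by auto
  have spP: "vec.span {p} = P"
  proof (rule card_subset_eq)
    show "vec.span {p} \<subseteq> P" using vec.span_minimal[of "{p}" P] pP subP by blast
    have "vec.dim (vec.span {p}) = 1" using vec.dim_span_eq_card_independent[OF indp] by simp
    then show "card (vec.span {p}) = card P" using card_subspace[OF vec.subspace_span[of "{p}"]] cP by simp
  qed simp
  have pnot: "p \<notin> U" if U: "U \<in> ?Ps" for U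
  proof
    assume pU: "p \<in> U"
    have sU: "vec.subspace U" using U sub by blast
    have PU: "P \<subseteq> U" using vec.span_minimal[of "{p}" U] pU sU spP by blast
    have "P \<noteq> U" using U dP by auto
    then have "3 \<le> subspace_dist P U" using code_dist[OF code] U PC by blast
    moreover have "subspace_sum P U = U" using sum_sub[OF subP sU PU] .
    moreover have "P \<inter> U = P" using PU by blast
    ultimately show False using U dP unfolding subspace_dist_def by simp
  qed
  have full2: "subspace_sum U W = UNIV" if U: "U \<in> ?Ps" and W: "W \<in> ?Ps" and UW: "U \<noteq> W" for U W
  proof -
    have sL: "vec.subspace U" "vec.subspace W" using U W sub by auto
    have "3 \<le> subspace_dist U W" using code_dist[OF code] U W UW by blast
    moreover have "vec.dim (subspace_sum U W) + vec.dim (U \<inter> W) = 6" using dim_sum[OF sL] U W by simp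
    moreover have "vec.dim (subspace_sum U W) \<le> 5"
      using dim_subset_UNIV_cart_gen[of "subspace_sum U W"] by simp
    ultimately have "vec.dim (subspace_sum U W) = 5" unfolding subspace_dist_def by linarith
    moreover have "vec.subspace (subspace_sum U W)"
      unfolding subspace_sum_def using vec.subspace_sums[OF sL] .
    ultimately show ?thesis using full[of "subspace_sum U W"] by simp
  qed
  define AU where "AU = (\<lambda>U. {y. dp y p = 1 \<and> (\<forall>u\<in>U. dp y u = 0)})"
  have disj: "AU U \<inter> AU W = {}" if U: "U \<in> ?Ps" and W: "W \<in> ?Ps" and UW: "U \<noteq> W" for U W
  proof -
    { fix y assume y: "y \<in> AU U" "y \<in> AU W"
      have "p \<in> subspace_sum U W" using full2[OF U W UW] by simp
      then obtain u w where uw: "p = u + w" "u \<in> U" "w \<in> W" unfolding subspace_sum_def by blast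
      have "dp y u = 0" "dp y w = 0" using y uw(2,3) unfolding AU_def by blast+
      moreover have "dp y p = dp y u + dp y w" using uw(1) dp_add by metis
      ultimately have "dp y p = 0" by simp
      then have False using y unfolding AU_def by simp }
    then show ?thesis by blast
  qed
  have cAU: "?q \<le> card (AU U)" if U: "U \<in> ?Ps" for U
  proof -
    have sU: "vec.subspace U" using U sub by blast
    obtain B where B: "B \<subseteq> U" "vec.independent B" "U \<subseteq> vec.span B" "card B = vec.dim U"
      using vec.basis_exists by blast
    have cB: "card B = 3" using B(4) U by simp
    have pB: "p \<notin> vec.span B"
      using pnot[OF U] vec.span_minimal[OF B(1) sU] by blast
    have ind1: "vec.independent (insert p B)" by (rule vec.independent_insertI[OF pB B(2)])
    have "p \<notin> B" using pB vec.span_base by blast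
    then have "card (insert p B) = 4" using cB by (simp add: vec.finiteI_independent[OF B(2)])
    then have d4: "vec.dim (vec.span (insert p B)) = 4"
      using vec.dim_span_eq_card_independent[OF ind1] by simp
    obtain e where e: "e \<notin> vec.span (insert p B)"
    proof -
      have "vec.span (insert p B) \<noteq> UNIV"
      proof
        assume h: "vec.span (insert p B) = UNIV"
        have "vec.dim (UNIV :: ('a^5) set) = 4" using d4 unfolding h .
        moreover have "vec.dim (UNIV :: ('a^5) set) = CARD(5)" by (rule vec_dim_card)
        ultimately show False by simp
      qed
      then show ?thesis using that by blast
    qed
    have ind2: "vec.independent (insert e (insert p B))" by (rule vec.independent_insertI[OF e ind1])
    have eB: "e \<notin> B" "e \<noteq> p" using e vec.span_base[of _ "insert p B"] by blast+
    obtain y0 where y0: "\<forall>b\<in>insert e (insert p B). dp y0 b = (if b = p then 1 else 0)"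
      using exists_functional[OF ind2, of "\<lambda>b. if b = p then 1 else 0"] by blast
    obtain y1 where y1: "\<forall>b\<in>insert e (insert p B). dp y1 b = (if b = e then 1 else 0)"
      using exists_functional[OF ind2, of "\<lambda>b. if b = e then 1 else 0"] by blast
    have y0B: "\<forall>b\<in>B. dp y0 b = 0" using y0 \<open>p \<notin> B\<close> by auto
    have y1B: "\<forall>b\<in>B. dp y1 b = 0" using y1 eB by auto
    have y0p: "dp y0 p = 1" using y0 by simp
    have y1p: "dp y1 p = 0" using y1 eB by simp
    have y1e: "dp y1 e = 1" using y1 by simp
    define g where "g = (\<lambda>c::'a. y0 + c *s y1)"
    have "g ` UNIV \<subseteq> AU U"
    proof
      fix y assume "y \<in> g ` UNIV"
      then obtain c where c: "y = g c" by blast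
      have "dp y p = 1" using c y0p y1p unfolding g_def by (simp add: dp_add_left dp_scale_left)
      moreover have "\<forall>u\<in>U. dp y u = 0"
      proof
        fix u assume "u \<in> U"
        then have "u \<in> vec.span B" using B(3) by blast
        then have "dp y0 u = 0" "dp y1 u = 0" using dp_span y0B y1B by blast+
        then show "dp y u = 0" using c unfolding g_def by (simp add: dp_add_left dp_scale_left)
      qed
      ultimately show "y \<in> AU U" unfolding AU_def by blast
    qed
    moreover have "inj g"
    proof
      fix c d assume "g c = g d"
      then have "dp (g c) e = dp (g d) e" by simp
      then show "c = d" using y1e unfolding g_def by (simp add: dp_add_left dp_scale_left)
    qed
    ultimately have "card (g ` UNIV) \<le> card (AU U)" by (intro card_mono) auto
    moreover have "card (g ` UNIV) = ?q" using \<open>inj g\<close> by (simp add: card_image)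
    ultimately show ?thesis by simp
  qed
  have "card ?Ps * ?q = (\<Sum>U\<in>?Ps. ?q)" by simp
  also have "\<dots> \<le> (\<Sum>U\<in>?Ps. card (AU U))" by (rule sum_mono) (rule cAU)
  also have "\<dots> = card (\<Union>U\<in>?Ps. AU U)"
    proof (rule card_UN_disjoint[symmetric])
    show "\<forall>U\<in>?Ps. \<forall>W\<in>?Ps. U \<noteq> W \<longrightarrow> AU U \<inter> AU W = {}" using disj by blast
  qed simp_all
  also have "\<dots> \<le> card {y. dp y p = 1}" by (rule card_mono) (auto simp: AU_def)
  also have "\<dots> \<le> ?q ^ (CARD(5) - 1)" by (rule card_A[OF p0])
  also have "\<dots> = ?q ^ 3 * ?q" by (simp add: eval_nat_numeral algebra_simps)
  finally show ?thesis using q2 by simp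
qed

lemma part2:
  fixes C :: "('a::{finite,field} ^ 5) set set"
  assumes code: "subspace_code 3 C" and SC: "S \<in> C" and dS: "vec.dim S = 4"
  shows "card {U \<in> C. vec.dim U = 2} \<le> CARD('a) ^ 3"
proof -
  let ?q = "CARD('a)"
  let ?Ls = "{U \<in> C. vec.dim U = 2}"
  have q2: "2 \<le> ?q" by (rule q_ge2)
  have sub: "\<And>U. U \<in> C \<Longrightarrow> vec.subspace U" using code unfolding subspace_code_def by blast
  have subS: "vec.subspace S" using sub SC .
  have S0: "0 \<in> S" using subS vec.subspace_0 by blast
  have cS: "card S = ?q ^ 4" using card_subspace[OF subS] dS by simp
  have notin: "\<not> L \<subseteq> S" if L: "L \<in> ?Ls" for L
  proof
    assume LS: "L \<subseteq> S"
    have "L \<noteq> S" using L dS by auto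
    then have "3 \<le> subspace_dist L S" using code_dist[OF code] L SC by blast
    moreover have "subspace_sum L S = S" using sum_sub[OF sub subS LS] L by auto
    moreover have "L \<inter> S = L" using LS by blast
    ultimately show False using L dS unfolding subspace_dist_def by simp
  qed
  have cD: "?q ^ 2 - ?q \<le> card (L - S)" if L: "L \<in> ?Ls" for L
  proof -
    have sL: "vec.subspace L" using L sub by blast
    have cL: "card L = ?q ^ 2" using card_subspace[OF sL] L by simp
    have sI: "vec.subspace (L \<inter> S)" using vec.subspace_inter sL subS by blast
    have "L \<inter> S \<subset> L" using notin[OF L] by blast
    then have "card (L \<inter> S) < card L" by (rule psubset_card_mono[rotated]) simp
    then have "?q ^ vec.dim (L \<inter> S) < ?q ^ 2" using card_subspace[OF sI] cL by simp
    then have "vec.dim (L \<inter> S) < 2" using q2 by (simp add: power_strict_increasing_iff)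
    then have "?q ^ vec.dim (L \<inter> S) \<le> ?q ^ 1" using q2 by (intro power_increasing) auto
    then have "card (L \<inter> S) \<le> ?q" using card_subspace[OF sI] by simp
    moreover have "card (L - S) = card L - card (L \<inter> S)" by (simp add: card_Diff_subset_Int)
    ultimately show ?thesis using cL by simp
  qed
  have disj: "(L - S) \<inter> (M - S) = {}" if L: "L \<in> ?Ls" and M: "M \<in> ?Ls" and LM: "L \<noteq> M" for L M
  proof -
    have sL: "vec.subspace L" "vec.subspace M" using L M sub by auto
    have "3 \<le> subspace_dist L M" using code_dist[OF code] L M LM by blast
    moreover have "vec.dim (subspace_sum L M) + vec.dim (L \<inter> M) = 4" using dim_sum[OF sL] L M by simp
    ultimately have "vec.dim (L \<inter> M) = 0" unfolding subspace_dist_def by linarith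
    then have "L \<inter> M = {0}" by (rule dim0[OF vec.subspace_inter[OF sL]])
    moreover have "(L - S) \<inter> (M - S) \<subseteq> (L \<inter> M) - S" by (rule subsetI) simp
    ultimately show ?thesis using S0 by simp
  qed
  have "card ?Ls * (?q ^ 2 - ?q) = (\<Sum>L\<in>?Ls. (?q ^ 2 - ?q))" by simp
  also have "\<dots> \<le> (\<Sum>L\<in>?Ls. card (L - S))" by (rule sum_mono) (rule cD)
  also have "\<dots> = card (\<Union>L\<in>?Ls. L - S)"
    proof (rule card_UN_disjoint[symmetric])
    show "\<forall>L\<in>?Ls. \<forall>M\<in>?Ls. L \<noteq> M \<longrightarrow> (L - S) \<inter> (M - S) = {}" using disj by blast
  qed simp_all
  also have "\<dots> \<le> card (UNIV - S)" by (rule card_mono) auto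
  also have "\<dots> = ?q ^ 5 - ?q ^ 4" using cS card_univ[where 'a='a and 'n=5]
    by (simp add: card_Diff_subset)
  also have "\<dots> = ?q ^ 3 * (?q ^ 2 - ?q)"
  proof -
    have e1: "?q^5 = ?q^3 * ?q^2" "?q^4 = ?q^3 * ?q" by (simp_all add: eval_nat_numeral algebra_simps)
    show ?thesis unfolding e1 by (simp add: diff_mult_distrib2)
  qed
  finally have "card ?Ls * (?q ^ 2 - ?q) \<le> ?q ^ 3 * (?q ^ 2 - ?q)" .
  moreover have "0 < ?q ^ 2 - ?q" using q2 by (simp add: power2_eq_square)
  ultimately show ?thesis by simp
qed
theorem lemma1p1:
  fixes C :: "('a::{finite,field} ^ 5) set set"
  assumes "optimal_subspace_code 3 C"
  shows "((\<exists>P\<in>C. vec.dim P = 1) \<longrightarrow> card {U \<in> C. vec.dim U = 3} \<le> CARD('a) ^ 3) \<and>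
         ((\<exists>S\<in>C. vec.dim S = 4) \<longrightarrow> card {U \<in> C. vec.dim U = 2} \<le> CARD('a) ^ 3)"
proof -
  have code: "subspace_code 3 C" using assms unfolding optimal_subspace_code_def by blast
  show ?thesis using part1[OF code] part2[OF code] by blast
qed

end
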